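(* Let $T\ge2$. Let $\Phi$ be the $T\times T$ matrix with $\Phi_{ij}=1$ if $i>j$ and $\Phi_{ij}=0$ otherwise; let $\mathcal P=I_T-\frac1T\mathbf 1\mathbf 1^*$ be the orthogonal projector onto the hyperplane $V\subset\mathbb R^T$ (or $\mathbb C^T$) orthogonal to $\mathbf 1=(1,\dots,1)^*$; let $\tilde\Phi=\mathcal P\Phi\mathcal P$. Let $F$ be the cyclic lead operator $F(x_1,x_2,\dots,x_T)=(x_2,x_3,\dots,x_T,x_1)$, which preserves $V$, and let $F_V$ denote its restriction to $V$. Then $\tilde\Phi$ preserves $V$, and its restriction to $V$ equals $-(\mathbf 1_V-F_V)^{-1}$, where $\mathbf 1_V$ is the identity operator on $V$. *)

theory Defs
  imports "Jordan_Normal_Form.Matrix"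
begin

definition ones :: "nat \<Rightarrow> real vec" where
  "ones T = vec T (\<lambda>_. 1)"

definition Phi :: "nat \<Rightarrow> real mat" where
  "Phi T = mat T T (\<lambda>(i,j). if i > j then 1 else 0)"

definition Proj :: "nat \<Rightarrow> real mat" where
  "Proj T = 1\<^sub>m T - (1 / real T) \<cdot>\<^sub>m (mat_of_cols T [ones T] * mat_of_rows T [ones T])"

definition PhiTilde :: "nat \<Rightarrow> real mat" where
  "PhiTilde T = Proj T * Phi T * Proj T"

definition V :: "nat \<Rightarrow> real vec set" where
  "V T = {x \<in> carrier_vec T. x \<bullet> ones T = 0}"

definition F :: "nat \<Rightarrow> real vec \<Rightarrow> real vec" where
  "F T x = vec T (\<lambda>i. x $ ((i + 1) mod T))"

end

theory Submission
  imports Defs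
begin

lemma Proj_eq: "Proj T = mat T T (\<lambda>(i,j). (if i = j then 1 else 0) - 1 / real T)"
  unfolding Proj_def
  by (rule eq_matI) (auto simp: ones_def mat_of_cols_def mat_of_rows_def scalar_prod_def)

lemma Proj_vec: assumes "y \<in> carrier_vec T"
  shows "Proj T *\<^sub>v y = vec T (\<lambda>i. y $ i - (\<Sum>j<T. y $ j) / real T)"
proof (rule eq_vecI)
  fix i assume i: "i < dim_vec (vec T (\<lambda>i. y $ i - (\<Sum>j<T. y $ j) / real T))"
  hence i: "i < T" by simp
  have "(Proj T *\<^sub>v y) $ i = (\<Sum>j<T. ((if i = j then 1 else 0) - 1 / real T) * y $ j)"
    using i assms by (simp add: Proj_eq scalar_prod_def mult.commute lessThan_atLeast0)
  also have "\<dots> = (\<Sum>j<T. (if i = j then y $ j else 0)) - (\<Sum>j<T. y $ j) / real T"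
  proof -
    have "(\<Sum>j<T. ((if i = j then 1 else 0) - 1 / real T) * y $ j) = (\<Sum>j<T. (if i = j then y $ j else 0) - y $ j / real T)"
      by (rule sum.cong) (auto simp: algebra_simps)
    then show ?thesis by (simp add: sum_subtractf sum_divide_distrib)
  qed
  also have "\<dots> = y $ i - (\<Sum>j<T. y $ j) / real T" using i by simp
  finally show "(Proj T *\<^sub>v y) $ i = vec T (\<lambda>i. y $ i - (\<Sum>j<T. y $ j) / real T) $ i" using i by simp
qed (use assms in \<open>simp add: Proj_eq\<close>)

lemma Proj_vec_fun: "Proj T *\<^sub>v vec T f = vec T (\<lambda>i. f i - (\<Sum>j<T. f j) / real T)"
proof -
  have "(\<Sum>j<T. vec T f $ j) = (\<Sum>j<T. f j)" by (rule sum.cong) auto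
  then show ?thesis by (subst Proj_vec) (auto intro!: eq_vecI)
qed

lemma V_iff: "x \<in> V T \<longleftrightarrow> x \<in> carrier_vec T \<and> (\<Sum>j<T. x $ j) = 0"
  unfolding V_def by (auto simp: scalar_prod_def ones_def lessThan_atLeast0)

lemma Phi_vec: assumes "y \<in> carrier_vec T"
  shows "Phi T *\<^sub>v y = vec T (\<lambda>i. \<Sum>j<i. y $ j)"
proof (rule eq_vecI)
  fix i assume "i < dim_vec (vec T (\<lambda>i. \<Sum>j<i. y $ j))"
  hence i: "i < T" by simp
  have "(Phi T *\<^sub>v y) $ i = (\<Sum>j<T. (if j < i then y $ j else 0))"
    using i assms by (auto simp: Phi_def scalar_prod_def lessThan_atLeast0 intro!: sum.cong)
  also have "\<dots> = (\<Sum>j\<in>{..<T} \<inter> {j. j < i}. y $ j)"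
    by (simp add: sum.inter_restrict)
  also have "{..<T} \<inter> {j. j < i} = {..<i}" using i by auto
  finally show "(Phi T *\<^sub>v y) $ i = vec T (\<lambda>i. \<Sum>j<i. y $ j) $ i" using i by simp
qed (use assms in \<open>simp add: Phi_def\<close>)



lemma F_carrier[simp]: "F T x \<in> carrier_vec T"
  by (simp add: F_def)

lemma F_dim[simp]: "dim_vec (F T x) = T"
  by (simp add: F_def)

lemma F_nth: "i < T \<Longrightarrow> F T x $ i = x $ ((i + 1) mod T)"
  by (simp add: F_def)

lemma F_diff: assumes "a \<in> carrier_vec T" "b \<in> carrier_vec T"
  shows "F T (a - b) = F T a - F T b"
  by (rule eq_vecI) (use assms in \<open>auto simp: F_def\<close>)

lemma F_uminus: assumes "a \<in> carrier_vec T"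
  shows "F T (- a) = - F T a"
  by (rule eq_vecI) (use assms in \<open>auto simp: F_def\<close>)

lemma sum_F: assumes "T > 0"
  shows "(\<Sum>i<T. F T x $ i) = (\<Sum>i<T. x $ i)"
proof -
  obtain n where n: "T = Suc n" using assms by (cases T) auto
  have "(\<Sum>i<T. F T x $ i) = (\<Sum>i<Suc n. x $ ((i + 1) mod T))"
    using n by (simp add: F_nth)
  also have "\<dots> = (\<Sum>i<n. x $ ((i + 1) mod T)) + x $ 0"
    using n by simp
  also have "(\<Sum>i<n. x $ ((i + 1) mod T)) = (\<Sum>i<n. x $ Suc i)"
    using n by (intro sum.cong) auto
  also have "(\<Sum>i<n. x $ Suc i) + x $ 0 = (\<Sum>i<Suc n. x $ i)"
    using sum.lessThan_Suc_shift[of "\<lambda>i. x $ i" n] by linarith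
  finally show ?thesis using n by simp
qed

lemma kernel_zero: assumes "T > 0" "d \<in> V T" "d - F T d = 0\<^sub>v T"
  shows "d = 0\<^sub>v T"
proof -
  have dc: "d \<in> carrier_vec T" and ds: "(\<Sum>j<T. d $ j) = 0" using assms(2) V_iff by auto
  have step: "d $ i = d $ ((i + 1) mod T)" if "i < T" for i
  proof -
    have "(d - F T d) $ i = 0" using assms(3) that by simp
    thus ?thesis using that dc by (simp add: F_def)
  qed
  have const: "i < T \<Longrightarrow> d $ i = d $ 0" for i
  proof (induction i)
    case (Suc i)
    then have "d $ i = d $ Suc i" using step[of i] by simp
    with Suc show ?case by simp
  qed simp
  have "(\<Sum>j<T. d $ j) = (\<Sum>j<T. d $ 0)"
  proof (rule sum.cong)
    fix j assume "j \<in> {..<T}"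
    then show "d $ j = d $ 0" by (intro const) simp
  qed simp
  hence "real T * d $ 0 = 0" using ds by simp
  hence "d $ 0 = 0" using assms(1) by simp
  show ?thesis
  proof (rule eq_vecI)
    fix i assume "i < dim_vec (0\<^sub>v T :: real vec)"
    hence i: "i < T" by simp
    have "d $ i = d $ 0" by (rule const[OF i])
    then show "d $ i = (0\<^sub>v T :: real vec) $ i" using i \<open>d $ 0 = 0\<close> by simp
  qed (use dc in simp)
qed

lemma V_minus: assumes "a \<in> V T" "b \<in> V T" shows "a - b \<in> V T"
proof -
  have ac: "a \<in> carrier_vec T" and as: "(\<Sum>j<T. a $ j) = 0" using assms(1) V_iff by auto
  have bc: "b \<in> carrier_vec T" and bs: "(\<Sum>j<T. b $ j) = 0" using assms(2) V_iff by auto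
  have "(\<Sum>i<T. (a - b) $ i) = (\<Sum>i<T. a $ i - b $ i)"
    by (rule sum.cong) (use bc in auto)
  also have "\<dots> = 0" using as bs by (simp add: sum_subtractf)
  finally show ?thesis unfolding V_iff using ac bc by simp
qed

lemma V_uminus: assumes "a \<in> V T" shows "- a \<in> V T"
proof -
  have ac: "a \<in> carrier_vec T" and as: "(\<Sum>j<T. a $ j) = 0" using assms(1) V_iff by auto
  have "(\<Sum>i<T. (- a) $ i) = (\<Sum>i<T. - a $ i)"
    by (rule sum.cong) (use ac in auto)
  also have "\<dots> = 0" using as by (simp add: sum_negf)
  finally show ?thesis unfolding V_iff using ac by simp
qed

lemma V_F: assumes "a \<in> V T" "T > 0" shows "F T a \<in> V T"
  using assms sum_F[of T a] unfolding V_iff by simp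

theorem lemma1:
  fixes T :: nat
  assumes "T \<ge> 2"
  shows "(\<forall>x \<in> V T. PhiTilde T *\<^sub>v x \<in> V T)
    \<and> bij_betw (\<lambda>x. x - F T x) (V T) (V T)
    \<and> (\<forall>x \<in> V T. PhiTilde T *\<^sub>v x = - (inv_into (V T) (\<lambda>x. x - F T x) x))"
proof -
  define g where "g = (\<lambda>x. x - F T x)"
  have T0: "T > 0" using assms by simp
  define Y where "Y = (\<lambda>x. vec T (\<lambda>i. (\<Sum>j<i. x $ j) - (\<Sum>k<T. (\<Sum>j<k. x $ j)) / real T))"
  have PT: "PhiTilde T *\<^sub>v x = Y x" if x: "x \<in> V T" for x
  proof -
    have xc: "x \<in> carrier_vec T" and xs: "(\<Sum>j<T. x $ j) = 0" using x V_iff by auto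
    have Px: "Proj T *\<^sub>v x = x"
      by (rule eq_vecI) (use xc xs in \<open>auto simp: Proj_vec\<close>)
    have PC: "Proj T \<in> carrier_mat T T" by (simp add: Proj_eq)
    have PhC: "Phi T \<in> carrier_mat T T" by (simp add: Phi_def)
    have "PhiTilde T *\<^sub>v x = Proj T *\<^sub>v (Phi T *\<^sub>v (Proj T *\<^sub>v x))"
    proof -
      have "PhiTilde T *\<^sub>v x = (Proj T * Phi T) *\<^sub>v (Proj T *\<^sub>v x)"
        unfolding PhiTilde_def
        by (rule assoc_mult_mat_vec[OF mult_carrier_mat[OF PC PhC] PC xc])
      also have "\<dots> = Proj T *\<^sub>v (Phi T *\<^sub>v (Proj T *\<^sub>v x))"
        by (rule assoc_mult_mat_vec[OF PC PhC mult_mat_vec_carrier[OF PC xc]])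
      finally show ?thesis .
    qed
    also have "\<dots> = Proj T *\<^sub>v (vec T (\<lambda>i. \<Sum>j<i. x $ j))"
      using Px xc by (simp add: Phi_vec)
    also have "\<dots> = Y x" unfolding Y_def by (rule Proj_vec_fun)
    finally show ?thesis .
  qed
  have YV: "Y x \<in> V T" for x
  proof -
    define c where "c = (\<Sum>k<T. (\<Sum>j<k. x $ j)) / real T"
    have "(\<Sum>i<T. Y x $ i) = (\<Sum>i<T. (\<Sum>j<i. x $ j) - c)"
      by (rule sum.cong) (auto simp: Y_def c_def)
    also have "\<dots> = (\<Sum>i<T. (\<Sum>j<i. x $ j)) - real T * c"
      by (simp add: sum_subtractf)
    also have "\<dots> = 0" using T0 unfolding c_def by simp
    finally have "(\<Sum>i<T. Y x $ i) = 0" .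
    moreover have "Y x \<in> carrier_vec T" unfolding Y_def by simp
    ultimately show ?thesis unfolding V_iff by simp
  qed
  have Ydim: "dim_vec (Y x) = T" for x unfolding Y_def by simp
  have Yi: "j < T \<Longrightarrow> Y x $ j = (\<Sum>k<j. x $ k) - (\<Sum>k<T. (\<Sum>j<k. x $ j)) / real T" for x j
    unfolding Y_def by simp
  have gi: "i < T \<Longrightarrow> g (Y x) $ i = Y x $ i - Y x $ ((i + 1) mod T)" for x i
    unfolding g_def using Ydim[of x] by (simp add: F_nth)
  have gY: "g (Y x) = - x" if x: "x \<in> V T" for x
  proof (rule eq_vecI)
    have xc: "x \<in> carrier_vec T" and xs: "(\<Sum>j<T. x $ j) = 0" using x V_iff by auto
    fix i assume "i < dim_vec (- x)"
    hence i: "i < T" using xc by simp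
    show "g (Y x) $ i = (- x) $ i"
    proof (cases "i + 1 < T")
      case True
      then have "g (Y x) $ i = (\<Sum>k<i. x $ k) - (\<Sum>k<Suc i. x $ k)"
        using i by (simp add: gi Yi)
      also have "\<dots> = - x $ i" by simp
      finally show ?thesis using i xc by simp
    next
      case False
      hence iT1: "i + 1 = T" using i by auto
      have iT: "i = T - 1" "(i + 1) mod T = 0" using iT1 by auto
      have "(\<Sum>j<T. x $ j) = (\<Sum>j<i. x $ j) + x $ i"
        using iT1[symmetric] by simp
      define c where "c = (\<Sum>k<T. (\<Sum>j<k. x $ j)) / real T"
      have "g (Y x) $ i = Y x $ i - Y x $ 0" using gi[OF i] iT(2) by simp
      also have "\<dots> = ((\<Sum>k<i. x $ k) - c) - ((\<Sum>k<0. x $ k) - c)"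
        using Yi[OF i, of x] Yi[OF T0, of x] unfolding c_def by simp
      also have "\<dots> = - x $ i" using xs \<open>(\<Sum>j<T. x $ j) = (\<Sum>j<i. x $ j) + x $ i\<close> by simp
      finally have "g (Y x) $ i = - x $ i" .
      then show ?thesis using i xc by simp
    qed
  next
    show "dim_vec (g (Y x)) = dim_vec (- x)" using x unfolding V_iff carrier_vec_def g_def by (simp add: Ydim)
  qed
  have gV: "g x \<in> V T" if "x \<in> V T" for x
    unfolding g_def by (rule V_minus[OF that V_F[OF that T0]])
  have inj: "inj_on g (V T)"
  proof (rule inj_onI)
    fix a b assume a: "a \<in> V T" and b: "b \<in> V T" and e: "g a = g b"
    have ac: "a \<in> carrier_vec T" and bc: "b \<in> carrier_vec T" using a b V_iff by auto
    have dV: "a - b \<in> V T" by (rule V_minus[OF a b])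
    have "(a - b) - F T (a - b) = 0\<^sub>v T"
    proof (rule eq_vecI)
      fix i assume "i < dim_vec (0\<^sub>v T :: real vec)"
      hence i: "i < T" by simp
      have "g a $ i = g b $ i" using e by simp
      hence "a $ i - F T a $ i = b $ i - F T b $ i" using i ac bc unfolding g_def by (simp add: F_def)
      thus "((a - b) - F T (a - b)) $ i = (0\<^sub>v T :: real vec) $ i" using i ac bc by (simp add: F_def)
    qed (simp add: F_def)
    hence "a - b = 0\<^sub>v T" using kernel_zero[OF T0 dV] by simp
    show "a = b"
    proof (rule eq_vecI)
      fix i assume "i < dim_vec b"
      hence i: "i < T" using bc by simp
      have "(a - b) $ i = 0" using \<open>a - b = 0\<^sub>v T\<close> i by simp
      thus "a $ i = b $ i" using i ac bc by simp
    qed (use ac bc in simp)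
  qed
  have neg: "- Y x \<in> V T" and gneg: "g (- Y x) = x" if "x \<in> V T" for x
  proof -
    have yc: "Y x \<in> carrier_vec T" using YV V_iff by auto
    show "- Y x \<in> V T" by (rule V_uminus[OF YV])
    have "g (- Y x) = - g (Y x)"
    proof (rule eq_vecI)
      fix i assume "i < dim_vec (- g (Y x))"
      hence i: "i < T" unfolding g_def using Ydim[of x] by simp
      show "g (- Y x) $ i = (- g (Y x)) $ i" using i Ydim[of x] unfolding g_def by (simp add: F_def)
    qed (simp add: g_def F_def)
    also have "\<dots> = x" using gY[OF that] by simp
    finally show "g (- Y x) = x" .
  qed
  have surj: "g ` V T = V T"
  proof
    show "g ` V T \<subseteq> V T" using gV by auto
    show "V T \<subseteq> g ` V T"
    proof
      fix x assume xV: "x \<in> V T"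
      show "x \<in> g ` V T" using image_eqI[of x g "- Y x" "V T"] gneg[OF xV] neg[OF xV] by simp
    qed
  qed
  have bij: "bij_betw g (V T) (V T)" using inj surj by (simp add: bij_betw_def)
  have inv: "PhiTilde T *\<^sub>v x = - inv_into (V T) g x" if x: "x \<in> V T" for x
  proof -
    have "inv_into (V T) g x = - Y x"
      using inv_into_f_f[OF inj neg[OF x]] gneg[OF x] by simp
    then show ?thesis using PT[OF x] by simp
  qed
  have A: "\<forall>x\<in>V T. PhiTilde T *\<^sub>v x \<in> V T" using PT YV by simp
  have B: "bij_betw (\<lambda>x. x - F T x) (V T) (V T)" using bij unfolding g_def .
  have C: "\<forall>x\<in>V T. PhiTilde T *\<^sub>v x = - inv_into (V T) (\<lambda>x. x - F T x) x"
    using inv unfolding g_def by blast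
  show ?thesis using A B C by (intro conjI)
qed

end
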